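(* For every $\delta\in(0,1]$ there is $c>0$ such that every eigenvalue $\lambda$ of the matrix $a(u)^{-1}m(u)$ satisfies $\lambda\ge c$, for all $u\in\mathbb{R}^3$ with $|u|\le1-\delta$.
   Context: $\rho\in C_0^\infty(\mathbb{R}^3)$ radial with $\mathsf e=\int\rho\neq0$, $\hat\rho(k)=(2\pi)^{-3/2}\int\rho e^{-ik\cdot x}$. For $|u|<1$: $\gamma=(1-|u|^2)^{-1/2}$, $m_0(u)w=\gamma w+\gamma^3(u\cdot w)u$, $m_e=\frac13\int|\hat\rho(k)|^2|k|^{-2}dk$, $\varphi(s)=\frac{1}{2s^2(1-s^2)}-\frac{1}{4s^3}\log\frac{1+s}{1-s}$, $m_f(u)w=3m_e(\varphi(|u|)w+|u|^{-1}\varphi'(|u|)(u\cdot w)u)$, $m=m_0+m_f$, $a(u)w=\frac{\mathsf e^2}{12\pi}[\gamma^4w+4\gamma^6(u\cdot w)u]$. *)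

theory Defs
  imports "HOL-Analysis.Analysis"
begin

text \<open>Infinitely differentiable real functions on R^3: there is a family of functions
containing f that is closed under taking (everywhere existing) partial derivatives.\<close>
definition smooth3 :: "(real^3 \<Rightarrow> real) \<Rightarrow> bool" where
  "smooth3 f \<longleftrightarrow> (\<exists>F. f \<in> F \<and>
     (\<forall>g\<in>F. (\<forall>x. g differentiable (at x)) \<and>
              (\<forall>i. (\<lambda>x. frechet_derivative g (at x) (axis i 1)) \<in> F)))"

definition compact_support3 :: "(real^3 \<Rightarrow> real) \<Rightarrow> bool" where
  "compact_support3 f \<longleftrightarrow> compact (closure {x. f x \<noteq> 0})"

definition radial3 :: "(real^3 \<Rightarrow> real) \<Rightarrow> bool" where
  "radial3 f \<longleftrightarrow> (\<forall>x y. norm x = norm y \<longrightarrow> f x = f y)"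

definition charge :: "(real^3 \<Rightarrow> real) \<Rightarrow> real" where
  "charge \<rho> = (\<integral>x. \<rho> x \<partial>lborel)"

definition rho_hat :: "(real^3 \<Rightarrow> real) \<Rightarrow> real^3 \<Rightarrow> complex" where
  "rho_hat \<rho> k = complex_of_real ((2*pi) powr (-3/2)) *
      (\<integral>x. complex_of_real (\<rho> x) * cis (- (k \<bullet> x)) \<partial>lborel)"

definition m_e :: "(real^3 \<Rightarrow> real) \<Rightarrow> real" where
  "m_e \<rho> = (1/3) * (\<integral>k. (cmod (rho_hat \<rho> k))\<^sup>2 / (norm k)\<^sup>2 \<partial>lborel)"

definition gam :: "real^3 \<Rightarrow> real" where
  "gam u = 1 / sqrt (1 - (norm u)\<^sup>2)"

text \<open>phi, extended continuously by its limit 1/3 at s = 0.\<close>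
definition phi :: "real \<Rightarrow> real" where
  "phi s = (if s = 0 then 1/3 else
      1 / (2 * s\<^sup>2 * (1 - s\<^sup>2)) - 1 / (4 * s^3) * ln ((1 + s) / (1 - s)))"

definition m0 :: "real^3 \<Rightarrow> real^3^3" where
  "m0 u = (\<chi> i j. gam u * (if i = j then 1 else 0) + (gam u)^3 * (u$i) * (u$j))"

text \<open>m_f(u) w = 3 m_e (phi(|u|) w + |u|^(-1) phi'(|u|) (u.w) u);
  at u = 0 the second term vanishes (inverse 0 = 0; it is also its continuous limit).\<close>
definition mf :: "(real^3 \<Rightarrow> real) \<Rightarrow> real^3 \<Rightarrow> real^3^3" where
  "mf \<rho> u = (\<chi> i j. 3 * m_e \<rho> * (phi (norm u) * (if i = j then 1 else 0)
        + inverse (norm u) * deriv phi (norm u) * (u$i) * (u$j)))"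

definition mm :: "(real^3 \<Rightarrow> real) \<Rightarrow> real^3 \<Rightarrow> real^3^3" where
  "mm \<rho> u = m0 u + mf \<rho> u"

definition aa :: "(real^3 \<Rightarrow> real) \<Rightarrow> real^3 \<Rightarrow> real^3^3" where
  "aa \<rho> u = (\<chi> i j. (charge \<rho>)\<^sup>2 / (12 * pi) *
       ((gam u)^4 * (if i = j then 1 else 0) + 4 * (gam u)^6 * (u$i) * (u$j)))"

definition cmat :: "real^3^3 \<Rightarrow> complex^3^3" where
  "cmat A = (\<chi> i j. complex_of_real (A$i$j))"

definition is_eigenvalue3 :: "real^3^3 \<Rightarrow> complex \<Rightarrow> bool" where
  "is_eigenvalue3 A l \<longleftrightarrow> (\<exists>v::complex^3. v \<noteq> 0 \<and> cmat A *v v = l *s v)"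

end

theory Submission
  imports Defs
begin


lemma artanh_lower: fixes s::real assumes "0 \<le> s" "s < 1" shows "s \<le> artanh s"
proof -
  have "(\<lambda>x. artanh x - x) 0 \<le> (\<lambda>x. artanh x - x) s"
  proof (rule DERIV_nonneg_imp_increasing_open[OF assms(1)])
    fix x :: real assume x: "0 < x" "x < s"
    have "((\<lambda>x. artanh x - x) has_real_derivative (1/(1-x^2) - 1)) (at x)"
      using x assms by (auto intro!: derivative_eq_intros)
    moreover have "1/(1-x^2) - 1 \<ge> 0"
    proof -
      have "\<bar>x\<bar> < 1" using x assms by auto
      then have "x^2 < 1" by (simp add: abs_square_less_1)
      then have "1/(1-x^2) \<ge> 1" by (simp add: field_simps)
      then show ?thesis by simp
    qed
    ultimately show "\<exists>y. ((\<lambda>x. artanh x - x) has_real_derivative y) (at x) \<and> 0 \<le> y" by blast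
  next
    show "continuous_on {0..s} (\<lambda>x. artanh x - x)"
      using assms by (auto intro!: continuous_intros)
  qed
  then show ?thesis by simp
qed

lemma artanh_upper: fixes s::real assumes "0 \<le> s" "s < 1" shows "artanh s \<le> s/(1-s^2)"
proof -
  have "(\<lambda>x. x/(1-x^2) - artanh x) 0 \<le> (\<lambda>x. x/(1-x^2) - artanh x) s"
  proof (rule DERIV_nonneg_imp_increasing_open[OF assms(1)])
    fix x :: real assume x: "0 < x" "x < s"
    have xa: "\<bar>x\<bar> < 1" using x assms by auto
    then have x2: "x^2 < 1" by (simp add: abs_square_less_1)
    have x3: "1 - x^2 \<noteq> 0" using x2 by simp
    have "((\<lambda>x. x/(1-x^2) - artanh x) has_real_derivative
        ((1*(1-x^2) - x*(-(2*x)))/(1-x^2)^2 - 1/(1-x^2))) (at x)"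
      using xa x3 by (auto intro!: derivative_eq_intros simp: power2_eq_square)
    moreover have "((1*(1-x^2) - x*(-(2*x)))/(1-x^2)^2 - 1/(1-x^2)) = 2*x^2/(1-x^2)^2"
      using x3 by (simp add: divide_simps) algebra
    moreover have "2*x^2/(1-x^2)^2 \<ge> 0" by simp
    ultimately show "\<exists>y. ((\<lambda>x. x/(1-x^2) - artanh x) has_real_derivative y) (at x) \<and> 0 \<le> y" by auto
  next
    have h: "\<forall>x\<in>{0..s}. \<bar>x\<bar> < 1 \<and> 1 - x^2 \<noteq> 0"
    proof
      fix x assume "x \<in> {0..s}"
      then have a: "\<bar>x\<bar> < 1" using assms by auto
      then have "x^2 < 1" by (simp add: abs_square_less_1)
      with a show "\<bar>x\<bar> < 1 \<and> 1 - x^2 \<noteq> 0" by simp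
    qed
    show "continuous_on {0..s} (\<lambda>x. x/(1-x^2) - artanh x)"
      using h by (intro continuous_intros) auto
  qed
  then show ?thesis by simp
qed


lemma e1: fixes s a :: real assumes "0 < s" "s^2 < 1"
  shows "1/(2 * s^2 * (1-s^2)) - a/(2 * s^3) = (s - a * (1-s^2)) / (2 * s^3 * (1-s^2))"
proof -
  have "1 - s^2 \<noteq> 0" using assms by simp
  then show ?thesis using assms by (simp add: divide_simps) (simp add: algebra_simps power2_eq_square power3_eq_cube)
qed
lemma e2: fixes s a :: real assumes "0 < s" "s^2 < 1"
  shows "(1/(2 * s^2 * (1-s^2)) - a/(2 * s^3)) + s * (-(2*(2 * s * (1-s^2) + s^2 * (-(2 * s))))/(2 * s^2 * (1-s^2))^2
      - ((1/(1-s^2))*(2 * s^3) - a * (2*(3 * s^2)))/(2 * s^3)^2)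
   = (a * (1-s^2)^2 - s * (1 - 2 * s^2)) / (s^3 * (1-s^2)^2)"
proof -
  have "1 - s^2 \<noteq> 0" using assms by simp
  then show ?thesis using assms by (simp add: divide_simps) algebra
qed


lemma phi_eq: fixes s::real assumes "0 < s" "s < 1"
  shows "phi s = 1/(2* s^2*(1-s^2)) - artanh s/(2* s^3)"
  using assms by (simp add: phi_def artanh_def)

lemma phi_deriv: fixes s::real assumes "0 < s" "s < 1"
  shows "(phi has_real_derivative
     (-(2*(2* s*(1-s^2) + s^2*(-(2* s))))/(2* s^2*(1-s^2))^2
      - ((1/(1-s^2))*(2* s^3) - artanh s*(2*(3* s^2)))/(2* s^3)^2)) (at s)"
proof -
  have s2: "s^2 < 1" using assms by (simp add: abs_square_less_1)
  have "((\<lambda>x. 1/(2*x^2*(1-x^2)) - artanh x/(2*x^3)) has_real_derivative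
     (-(2*(2* s*(1-s^2) + s^2*(-(2* s))))/(2* s^2*(1-s^2))^2
      - ((1/(1-s^2))*(2* s^3) - artanh s*(2*(3* s^2)))/(2* s^3)^2)) (at s)"
    using assms s2
    apply (auto intro!: derivative_eq_intros simp: abs_less_iff)
    apply (simp add: field_simps power2_eq_square power3_eq_cube)
    done
  then show ?thesis
    apply (rule has_field_derivative_transform_within_open[where S="{0<..<1}"])
    using assms by (auto simp: phi_eq)
qed



lemma phi_nonneg: fixes s::real assumes "0 \<le> s" "s < 1" shows "0 \<le> phi s"
proof (cases "s = 0")
  case True then show ?thesis by (simp add: phi_def)
next
  case False
  then have s: "0 < s" using assms by simp
  have s2: "s^2 < 1" using assms by (simp add: abs_square_less_1)
  have e: "phi s = (s - artanh s * (1-s^2)) / (2 * s^3 * (1-s^2))"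
    unfolding phi_eq[OF s assms(2)] by (rule e1[OF s s2])
  have "artanh s \<le> s / (1-s^2)" using artanh_upper[OF assms] .
  then have "artanh s * (1-s^2) \<le> s"
    using s2 by (simp add: pos_le_divide_eq)
  then have n: "0 \<le> s - artanh s * (1-s^2)" by simp
  have "0 < 1 - s^2" using s2 by simp
  then have d: "0 < 2 * s^3 * (1-s^2)" using s by simp
  show ?thesis unfolding e by (rule divide_nonneg_pos[OF n d])
qed

lemma phi_combo: fixes s::real assumes "0 < s" "s < 1" shows "0 \<le> phi s + s * deriv phi s"
proof -
  have s2: "s^2 < 1" using assms by (simp add: abs_square_less_1)
  note d = DERIV_imp_deriv[OF phi_deriv[OF assms]]
  have e: "phi s + s * deriv phi s = (artanh s * (1-s^2)^2 - s * (1 - 2 * s^2)) / (s^3 * (1-s^2)^2)"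
    unfolding d phi_eq[OF assms] by (rule e2[OF assms(1) s2])
  have a: "s \<le> artanh s" using artanh_lower assms by simp
  have "s * (1-s^2)^2 \<le> artanh s * (1-s^2)^2" using a by (simp add: mult_right_mono)
  moreover have "s * (1 - 2 * s^2) \<le> s * (1-s^2)^2"
  proof -
    have "(1-s^2)^2 = (1 - 2 * s^2) + (s^2)^2" by algebra
    then have "(1 - 2 * s^2) \<le> (1-s^2)^2" by simp
    then show ?thesis using assms by simp
  qed
  ultimately have num: "0 \<le> artanh s * (1-s^2)^2 - s * (1 - 2 * s^2)" by linarith
  have "0 < 1 - s^2" using s2 by simp
  then have d: "0 < s^3 * (1-s^2)^2" using assms by simp
  show ?thesis unfolding e by (rule divide_nonneg_pos[OF num d])
qed



definition rk1 :: "real \<Rightarrow> real \<Rightarrow> real^3 \<Rightarrow> real^3^3" where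
  "rk1 p q u = (\<chi> i j. p * (if i = j then 1 else 0) + q * u$i * u$j)"


lemma mv_real: "(rk1 p q u *v x) $ i = p * x$i + q * u$i * (u \<bullet> x)"
proof -
  have "(rk1 p q u *v x) $ i = (\<Sum>j\<in>UNIV. (if i = j then p * x$j else 0) + q * u$i * (u$j * x$j))"
    unfolding rk1_def matrix_vector_mult_def by (auto intro!: sum.cong simp: algebra_simps)
  also have "\<dots> = p * x$i + q * u$i * (u \<bullet> x)"
    by (simp add: sum.distrib inner_vec_def sum_distrib_left)
  finally show ?thesis .
qed

lemma mv_cplx: "(cmat (rk1 p q u) *v v) $ i
   = of_real p * v$i + of_real q * of_real (u$i) * (\<Sum>j\<in>UNIV. of_real (u$j) * v$j)"
proof -
  have "(cmat (rk1 p q u) *v v) $ i = (\<Sum>j\<in>UNIV. (if i = j then of_real p * v$j else 0)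
        + of_real q * of_real (u$i) * (of_real (u$j) * v$j))"
    unfolding rk1_def cmat_def matrix_vector_mult_def by (auto intro!: sum.cong simp: algebra_simps)
  also have "\<dots> = of_real p * v$i + of_real q * of_real (u$i) * (\<Sum>j\<in>UNIV. of_real (u$j) * v$j)"
    by (simp add: sum.distrib sum_distrib_left)
  finally show ?thesis .
qed

lemma norm_sq: "(norm (u::real^3))^2 = (\<Sum>j\<in>UNIV. (u$j)^2)"
  unfolding power2_norm_eq_inner inner_vec_def by (simp add: power2_eq_square)

lemma cmat_mult: "cmat (X ** Y) = cmat X ** cmat Y"
  by (simp add: cmat_def matrix_matrix_mult_def vec_eq_iff)

lemma cmat_one: "cmat (mat 1) = mat 1"
  by (simp add: cmat_def mat_def vec_eq_iff)

lemma rk1_invertible: assumes "p \<noteq> 0" "p + q * (norm u)^2 \<noteq> 0"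
  shows "invertible (rk1 p q u)"
  unfolding invertible_left_inverse matrix_left_invertible_ker
proof (intro allI impI)
  fix x assume x: "rk1 p q u *v x = 0"
  then have c: "p * x$i + q * u$i * (u \<bullet> x) = 0" for i
    using mv_real[of p q u x i] by simp
  have "(\<Sum>i\<in>UNIV. u$i * (p * x$i + q * u$i * (u \<bullet> x))) = 0" using c by simp
  moreover have "(\<Sum>i\<in>UNIV. u$i * (p * x$i + q * u$i * (u \<bullet> x)))
      = p * (u \<bullet> x) + q * (norm u)^2 * (u \<bullet> x)"
    unfolding norm_sq by (simp add: inner_vec_def sum.distrib sum_distrib_left sum_distrib_right
         algebra_simps power2_eq_square)
  ultimately have "(p + q * (norm u)^2) * (u \<bullet> x) = 0" by (simp add: algebra_simps)
  then have "u \<bullet> x = 0" using assms by simp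
  then have "p * x$i = 0" for i using c[of i] by simp
  then show "x = 0" using assms by (simp add: vec_eq_iff)
qed

lemma matrix_inv_right': assumes "invertible (A::real^3^3)" shows "A ** matrix_inv A = mat 1"
proof -
  have "\<exists>A'. A ** A' = mat 1 \<and> A' ** A = mat 1" using assms by (simp add: invertible_def)
  then show ?thesis unfolding matrix_inv_def by (rule someI2_ex) simp
qed

lemma eig_rk1:
  assumes "p \<noteq> 0" "p + q * (norm u)^2 \<noteq> 0"
    and "is_eigenvalue3 (matrix_inv (rk1 p q u) ** rk1 m n u) l"
  shows "l = of_real (m / p) \<or> l = of_real ((m + n * (norm u)^2) / (p + q * (norm u)^2))"
proof -
  let ?A = "rk1 p q u" and ?M = "rk1 m n u"
  obtain v where v: "v \<noteq> 0" "cmat (matrix_inv ?A ** ?M) *v v = l *s v"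
    using assms(3) unfolding is_eigenvalue3_def by blast
  have AI: "?A ** matrix_inv ?A = mat 1" by (rule matrix_inv_right'[OF rk1_invertible[OF assms(1,2)]])
  have AI': "cmat ?A ** cmat (matrix_inv ?A) = mat 1" using AI cmat_mult cmat_one by metis
  have "cmat ?A *v (cmat (matrix_inv ?A ** ?M) *v v) = cmat ?A *v (l *s v)" using v by simp
  then have eq: "cmat ?M *v v = l *s (cmat ?A *v v)"
    by (simp add: vector_scalar_commute matrix_vector_mul_assoc cmat_mult matrix_mul_assoc AI')
  define t where "t = (\<Sum>j\<in>UNIV. complex_of_real (u$j) * v$j)"
  define S where "S = (norm u)^2"
  have ci: "of_real m * v$i + of_real n * of_real (u$i) * t
       = l * (of_real p * v$i + of_real q * of_real (u$i) * t)" for i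
    using arg_cong[OF eq, of "\<lambda>w. w $ i"] by (simp add: mv_cplx t_def)
  have Sdef: "complex_of_real S = (\<Sum>j\<in>UNIV. (complex_of_real (u$j))^2)"
    unfolding S_def norm_sq by simp
  have "(\<Sum>i\<in>UNIV. of_real (u$i) * (of_real m * v$i + of_real n * of_real (u$i) * t))
     = (\<Sum>i\<in>UNIV. of_real (u$i) * (l * (of_real p * v$i + of_real q * of_real (u$i) * t)))"
    using ci by simp
  then have "(of_real m + of_real n * of_real S) * t = l * ((of_real p + of_real q * of_real S) * t)"
    unfolding Sdef t_def
    by (simp add: sum.distrib sum_distrib_left sum_distrib_right algebra_simps power2_eq_square)
  show ?thesis
  proof (cases "t = 0")
    case False
    have "t * ((of_real m + of_real n * of_real S) - l * (of_real p + of_real q * of_real S)) = 0"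
      using \<open>(of_real m + of_real n * of_real S) * t = _\<close> by (simp add: algebra_simps)
    then have "of_real m + of_real n * of_real S = l * (of_real p + of_real q * of_real S)"
      using False by simp
    moreover have "complex_of_real p + of_real q * of_real S \<noteq> 0"
      using assms(2) unfolding S_def by (metis of_real_add of_real_eq_0_iff of_real_mult)
    ultimately have "l = (of_real m + of_real n * of_real S) / (of_real p + of_real q * of_real S)"
      by (simp add: field_simps)
    then show ?thesis unfolding S_def by simp
  next
    case True
    obtain i where "v$i \<noteq> 0" using v(1) by (metis vec_eq_iff zero_index)
    moreover have "of_real m * v$i = l * of_real p * v$i" using ci[of i] True by simp
    ultimately have "of_real m = l * of_real p" by simp
    then have "l = of_real m / of_real p" using assms(1) by (simp add: field_simps)
    then show ?thesis by simp
  qed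
qed



lemma bound1:
  fixes K g G me A :: real
  assumes "K > 0" "1 \<le> g" "g \<le> G" "0 \<le> me" "0 \<le> A"
  shows "1 / (4 * K * G^3) \<le> (g + 3 * me * A) / (K * g^4)"
proof -
  have "1 / (4 * K * G^3) \<le> 1 / (K * g^3)"
    using assms by (intro divide_left_mono mult_mono power_mono) auto
  also have "1 / (K * g^3) = g / (K * g^4)" using assms by (simp add: field_simps power_eq_if)
  also have "\<dots> \<le> (g + 3 * me * A) / (K * g^4)"
    using assms by (intro divide_right_mono) auto
  finally show ?thesis .
qed

lemma bound2:
  fixes K g G me B S :: real
  assumes "K > 0" "1 \<le> g" "g \<le> G" "0 \<le> me" "0 \<le> B" "g^2 * (1 - S) = 1" "0 \<le> S"
  shows "1 / (4 * K * G^3) \<le> (g + g^3 * S + 3 * me * B) / (K * g^4 + 4 * K * g^6 * S)"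
proof -
  have gS: "g^2 * S = g^2 - 1" using assms(6) by (simp add: algebra_simps)
  have num: "g + g^3 * S = g^3"
  proof -
    have "g + g^3 * S = g + g * (g^2 * S)" by (simp add: power_eq_if)
    also have "\<dots> = g^3" unfolding gS by (simp add: algebra_simps power_eq_if)
    finally show ?thesis .
  qed
  have den: "K * g^4 + 4 * K * g^6 * S = K * g^4 * (4 * g^2 - 3)"
  proof -
    have "K * g^4 + 4 * K * g^6 * S = K * g^4 + 4 * K * g^4 * (g^2 * S)" by (simp add: power_eq_if)
    then show ?thesis unfolding gS by (simp add: algebra_simps)
  qed
  have g2: "1 \<le> g^2" using assms by (simp add: one_le_power)
  have g3: "0 < 4 * g^2 - 3" using g2 by linarith
  have dpos: "0 < K * g^4 * (4 * g^2 - 3)" using assms g3 by (intro mult_pos_pos) auto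
  have "1 / (4 * K * G^3) \<le> 1 / (4 * K * g^3)"
    using assms by (intro divide_left_mono mult_mono power_mono) auto
  also have "1 / (4 * K * g^3) = g^3 / (K * g^4 * (4 * g^2))" using assms by (simp add: field_simps power_eq_if)
  also have "\<dots> \<le> g^3 / (K * g^4 * (4 * g^2 - 3))"
    using assms dpos by (intro divide_left_mono) auto
  also have "\<dots> \<le> (g + g^3 * S + 3 * me * B) / (K * g^4 + 4 * K * g^6 * S)"
    unfolding den num using assms dpos by (intro divide_right_mono) auto
  finally show ?thesis .
qed


theorem lemma4p1:
  fixes \<rho> :: "real^3 \<Rightarrow> real" and \<delta> :: real
  assumes "smooth3 \<rho>" and "compact_support3 \<rho>" and "radial3 \<rho>"
    and "charge \<rho> \<noteq> 0"
    and "0 < \<delta>" and "\<delta> \<le> 1"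
  shows "\<exists>c>0. \<forall>u::real^3. norm u \<le> 1 - \<delta> \<longrightarrow>
           (\<forall>l. is_eigenvalue3 (matrix_inv (aa \<rho> u) ** mm \<rho> u) l \<longrightarrow>
                 Im l = 0 \<and> c \<le> Re l)"
proof -
  define K where "K = (charge \<rho>)^2 / (12 * pi)"
  have K: "K > 0" using assms(4) by (simp add: K_def)
  define G where "G = 1 / sqrt (1 - (1 - \<delta>)^2)"
  have d1: "(1 - \<delta>)^2 < 1"
  proof -
    have "\<bar>1 - \<delta>\<bar> < 1" using assms(5,6) by auto
    then show ?thesis by (simp add: abs_square_less_1)
  qed
  have Gpos: "G > 0" unfolding G_def using d1 by simp
  define me where "me = m_e \<rho>"
  have me: "0 \<le> me" unfolding me_def m_e_def
    by (intro mult_nonneg_nonneg integral_nonneg_AE AE_I2) auto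
  show ?thesis
  proof (rule exI[of _ "1 / (4 * K * G^3)"], rule conjI)
    show "0 < 1 / (4 * K * G^3)" using K Gpos by simp
  next
    show "\<forall>u::real^3. norm u \<le> 1 - \<delta> \<longrightarrow>
           (\<forall>l. is_eigenvalue3 (matrix_inv (aa \<rho> u) ** mm \<rho> u) l \<longrightarrow>
                 Im l = 0 \<and> 1 / (4 * K * G^3) \<le> Re l)"
    proof (intro allI impI)
    fix u :: "real^3" and l
    assume u: "norm u \<le> 1 - \<delta>"
      and ev: "is_eigenvalue3 (matrix_inv (aa \<rho> u) ** mm \<rho> u) l"
    define s where "s = norm u"
    define S where "S = s^2"
    define g where "g = gam u"
    have s0: "0 \<le> s" unfolding s_def by simp
    have S0: "0 \<le> S" unfolding S_def by simp
    have SS: "S \<le> (1 - \<delta>)^2" unfolding S_def using u s0 unfolding s_def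
      by (intro power_mono) auto
    have S1: "S < 1" using SS d1 by linarith
    have s1: "s < 1" using u assms(5) unfolding s_def by linarith
    have gdef: "g = 1 / sqrt (1 - S)" unfolding g_def gam_def S_def s_def ..
    have sq: "0 < sqrt (1 - S)" using S1 by simp
    have sq1: "sqrt (1 - S) \<le> 1" using S0 by simp
    have g1: "1 \<le> g" unfolding gdef using sq sq1 by simp
    have sq2: "sqrt (1 - (1 - \<delta>)^2) \<le> sqrt (1 - S)" using SS by simp
    have gG: "g \<le> G" unfolding gdef G_def using sq sq2 d1
      by (intro divide_left_mono) auto
    have gS: "g^2 * (1 - S) = 1"
    proof -
      have "g^2 = 1 / (1 - S)" unfolding gdef using S1 by (simp add: power_divide)
      then show ?thesis using S1 by simp
    qed
    define \<mu> where "\<mu> = g + 3 * me * phi s"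
    define \<nu> where "\<nu> = g^3 + 3 * me * (inverse s * deriv phi s)"
    have mm: "mm \<rho> u = rk1 \<mu> \<nu> u"
      unfolding mm_def m0_def mf_def rk1_def \<mu>_def \<nu>_def me_def g_def s_def
      by (simp add: vec_eq_iff algebra_simps)
    have aa: "aa \<rho> u = rk1 (K * g^4) (4 * K * g^6) u"
      unfolding aa_def rk1_def K_def g_def
      by (simp add: vec_eq_iff algebra_simps)
    have p0: "0 < K * g^4" using K g1 by simp
    have pq0: "0 < K * g^4 + 4 * K * g^6 * S" using K g1 S0 p0 by (simp add: add_pos_nonneg)
    have pq0': "K * g^4 + 4 * K * g^6 * (norm u)^2 \<noteq> 0" using pq0 unfolding S_def s_def by simp
    have ev': "is_eigenvalue3 (matrix_inv (rk1 (K * g^4) (4 * K * g^6) u) ** rk1 \<mu> \<nu> u) l"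
      using ev unfolding mm aa .
    have p0': "K * g^4 \<noteq> 0" using p0 by linarith
    have cases: "l = of_real (\<mu> / (K * g^4)) \<or>
        l = of_real ((\<mu> + \<nu> * S) / (K * g^4 + 4 * K * g^6 * S))"
      using eig_rk1[OF p0' pq0' ev'] unfolding S_def s_def by assumption
    have A0: "0 \<le> phi s" using phi_nonneg[OF s0 s1] .
    define B where "B = phi s + s * deriv phi s"
    have B0: "0 \<le> B"
    proof (cases "s = 0")
      case True then show ?thesis unfolding B_def by (simp add: phi_def)
    next
      case False then show ?thesis unfolding B_def using phi_combo[of s] s0 s1 by simp
    qed
    have num: "\<mu> + \<nu> * S = g + g^3 * S + 3 * me * B"
    proof -
      have "inverse s * s^2 = s"
        by (cases "s = 0") (simp_all add: power2_eq_square)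
      then have "3 * me * (inverse s * deriv phi s) * S = 3 * me * (s * deriv phi s)"
        unfolding S_def by (metis mult.commute mult.left_commute)
      then show ?thesis unfolding \<mu>_def \<nu>_def B_def by (simp add: algebra_simps)
    qed
    show "Im l = 0 \<and> 1 / (4 * K * G^3) \<le> Re l"
      using cases
    proof
      assume l: "l = of_real (\<mu> / (K * g^4))"
      show ?thesis unfolding l using bound1[OF K g1 gG me A0] unfolding \<mu>_def by simp
    next
      assume l: "l = of_real ((\<mu> + \<nu> * S) / (K * g^4 + 4 * K * g^6 * S))"
      show ?thesis unfolding l num using bound2[OF K g1 gG me B0 gS S0] by simp
    qed
    qed
  qed
qed

end
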